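(* Let $n,m$ be positive integers and let $a^j_i, c^{x,j}_i, c^{y,j}_i, b_j \in \mathbb{R}$ be given for $i\in[n]$, $j\in\{0\}\cup[m]$ (with $b_j$ only for $j\in[m]$). Consider the following two optimization problems in the variables $x,y\in\mathbb{R}^n$, $u\in\mathbb{R}^{2n}$ and $w=(w_{i,k})_{(i,k)\in[2n]\times[2n]}$. McCormick relaxation: $$z_{Mc}:=\min \sum_{i\in[n]} a^0_i w_{i,n+i}+\sum_{i\in[n]}c^{x,0}_i x_i+\sum_{i\in[n]}c^{y,0}_i y_i$$ subject to (C1) $\sum_{i\in[n]} a^j_i w_{i,n+i}+\sum_{i\in[n]}c^{x,j}_i x_i+\sum_{i\in[n]}c^{y,j}_i y_i\ge b_j$ for all $j\in[m]$; (C2) $x_i=u_i$ and $y_i=u_{n+i}$ for all $i\in[n]$; (C3) $u\in[0,1]^{2n}$; (C4) $\max\{0,u_i+u_k-1\}\le w_{i,k}\le \min\{u_i,u_k\}$ for all $(i,k)\in[2n]\times[2n]$. McCormick+SDP relaxation: $$z_{MS}:=\min \sum_{i\in[n]} a^0_i w_{i,n+i}+\sum_{i\in[n]}c^{x,0}_i x_i+\sum_{i\in[n]}c^{y,0}_i y_i$$ subject to (C1)–(C4) and the constraint that the $(2n+1)\times(2n+1)$ matrix $$W:=\begin{bmatrix}1 & u^\top\\ u & w\end{bmatrix}$$ is (symmetric) positive semidefinite. Then either both problems are infeasible, or both are feasible and $z_{Mc}=z_{MS}$.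
   Context: These two problems are relaxations of the quadratically constrained program $\min \sum_i a^0_i x_iy_i+\sum_i c^{x,0}_ix_i+\sum_i c^{y,0}_iy_i$ s.t. $\sum_i a^j_i x_iy_i+\sum_i c^{x,j}_ix_i+\sum_i c^{y,j}_iy_i\ge b_j$ for $j\in[m]$, $x,y\in[0,1]^n$, where $w_{i,k}$ stands for the product $u_iu_k$ with $u=(x,y)$. Here $[n]=\{1,\dots,n\}$. *)

theory Defs
  imports Main "HOL-Analysis.Analysis"
begin

text \<open>Indices: i in [n] = {1..n}; u and w are indexed by [2n] = {1..2n}.
  Coefficients: a j i = a^j_i, cx j i = c^{x,j}_i, cy j i = c^{y,j}_i, b j = b_j.
  A point of the relaxation is (x, y, u, w).\<close>

definition objective ::
  "nat \<Rightarrow> (nat \<Rightarrow> nat \<Rightarrow> real) \<Rightarrow> (nat \<Rightarrow> nat \<Rightarrow> real) \<Rightarrow> (nat \<Rightarrow> nat \<Rightarrow> real)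
   \<Rightarrow> nat \<Rightarrow> (nat \<Rightarrow> real) \<Rightarrow> (nat \<Rightarrow> real) \<Rightarrow> (nat \<Rightarrow> nat \<Rightarrow> real) \<Rightarrow> real" where
  "objective n a cx cy j x y w =
     (\<Sum>i=1..n. a j i * w i (n+i)) + (\<Sum>i=1..n. cx j i * x i) + (\<Sum>i=1..n. cy j i * y i)"

definition mccormick_feasible ::
  "nat \<Rightarrow> nat \<Rightarrow> (nat \<Rightarrow> nat \<Rightarrow> real) \<Rightarrow> (nat \<Rightarrow> nat \<Rightarrow> real) \<Rightarrow> (nat \<Rightarrow> nat \<Rightarrow> real)
   \<Rightarrow> (nat \<Rightarrow> real) \<Rightarrow> (nat \<Rightarrow> real) \<Rightarrow> (nat \<Rightarrow> real) \<Rightarrow> (nat \<Rightarrow> real) \<Rightarrow> (nat \<Rightarrow> nat \<Rightarrow> real) \<Rightarrow> bool" where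
  "mccormick_feasible n m a cx cy b x y u w \<longleftrightarrow>
     (\<forall>j\<in>{1..m}. objective n a cx cy j x y w \<ge> b j) \<and>
     (\<forall>i\<in>{1..n}. x i = u i \<and> y i = u (n+i)) \<and>
     (\<forall>i\<in>{1..2*n}. 0 \<le> u i \<and> u i \<le> 1) \<and>
     (\<forall>i\<in>{1..2*n}. \<forall>k\<in>{1..2*n}.
        max 0 (u i + u k - 1) \<le> w i k \<and> w i k \<le> min (u i) (u k))"

definition Wmat :: "(nat \<Rightarrow> real) \<Rightarrow> (nat \<Rightarrow> nat \<Rightarrow> real) \<Rightarrow> nat \<Rightarrow> nat \<Rightarrow> real" where
  "Wmat u w i k = (if i = 0 \<and> k = 0 then 1 else if i = 0 then u k else if k = 0 then u i else w i k)"

definition sym_psd :: "nat \<Rightarrow> (nat \<Rightarrow> nat \<Rightarrow> real) \<Rightarrow> bool" where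
  "sym_psd N M \<longleftrightarrow>
     (\<forall>i\<in>{0..N}. \<forall>k\<in>{0..N}. M i k = M k i) \<and>
     (\<forall>v::nat \<Rightarrow> real. (\<Sum>i=0..N. \<Sum>k=0..N. v i * M i k * v k) \<ge> 0)"

definition mcsdp_feasible ::
  "nat \<Rightarrow> nat \<Rightarrow> (nat \<Rightarrow> nat \<Rightarrow> real) \<Rightarrow> (nat \<Rightarrow> nat \<Rightarrow> real) \<Rightarrow> (nat \<Rightarrow> nat \<Rightarrow> real)
   \<Rightarrow> (nat \<Rightarrow> real) \<Rightarrow> (nat \<Rightarrow> real) \<Rightarrow> (nat \<Rightarrow> real) \<Rightarrow> (nat \<Rightarrow> real) \<Rightarrow> (nat \<Rightarrow> nat \<Rightarrow> real) \<Rightarrow> bool" where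
  "mcsdp_feasible n m a cx cy b x y u w \<longleftrightarrow>
     mccormick_feasible n m a cx cy b x y u w \<and> sym_psd (2*n) (Wmat u w)"

definition is_min_value :: "('p \<Rightarrow> bool) \<Rightarrow> ('p \<Rightarrow> real) \<Rightarrow> real \<Rightarrow> bool" where
  "is_min_value P f z \<longleftrightarrow> (\<exists>p. P p \<and> f p = z) \<and> (\<forall>p. P p \<longrightarrow> z \<le> f p)"

end

theory Submission
  imports Defs "HOL-Analysis.Analysis"
begin

lemma det2:
  fixes x y t :: real
  assumes "0\<le>x" "x\<le>1" "0\<le>y" "y\<le>1" "max 0 (x+y-1) \<le> t" "t \<le> min x y"
  shows "(t - x*y)^2 \<le> (x - x*x)*(y - y*y)"
proof -
  define L where "L = max 0 (x+y-1)"
  define U where "U = min x y"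
  define f where "f = (\<lambda>s::real. (x - x*x)*(y-y*y) - (s - x*y)^2)"
  have fL: "f L \<ge> 0"
  proof (cases "x + y \<le> 1")
    case True
    then have "L = 0" unfolding L_def by simp
    moreover have "f 0 = x*y*(1-x-y)" unfolding f_def by (simp add: algebra_simps power2_eq_square)
    ultimately show ?thesis using True assms by simp
  next
    case False
    then have "L = x+y-1" unfolding L_def by simp
    moreover have "f (x+y-1) = (1-x)*(1-y)*(x+y-1)" unfolding f_def by (simp add: algebra_simps power2_eq_square)
    ultimately show ?thesis using False assms by simp
  qed
  have fU: "f U \<ge> 0"
  proof (cases "x \<le> y")
    case True
    then have "U = x" unfolding U_def by simp
    moreover have "f x = x*(1-y)*(y-x)" unfolding f_def by (simp add: algebra_simps power2_eq_square)
    ultimately show ?thesis using True assms by simp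
  next
    case False
    then have "U = y" unfolding U_def by simp
    moreover have "f y = y*(1-x)*(x-y)" unfolding f_def by (simp add: algebra_simps power2_eq_square)
    ultimately show ?thesis using False assms by simp
  qed
  have id: "(U-L) * f t = (U-t)*f L + (t-L)*f U + (U-t)*(t-L)*(U-L)"
    unfolding f_def by (simp add: algebra_simps power2_eq_square)
  have Lt: "L \<le> t" "t \<le> U" using assms unfolding L_def U_def by auto
  have "f t \<ge> 0"
  proof (cases "L = U")
    case True
    then have "t = L" using Lt by simp
    then show ?thesis using fL by simp
  next
    case False
    then have "U - L > 0" using Lt by simp
    moreover have "(U-L) * f t \<ge> 0" unfolding id using Lt fL fU by simp
    ultimately show ?thesis by (simp add: zero_le_mult_iff)
  qed
  then show ?thesis unfolding f_def by simp
qed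

lemma quad2:
  fixes X Y T a b :: real
  assumes "X \<ge> 0" "Y \<ge> 0" "T^2 \<le> X*Y"
  shows "0 \<le> X*a*a + T*a*b + T*b*a + Y*b*b"
proof (cases "X = 0")
  case True
  then have "T = 0" using assms by simp
  then show ?thesis using True assms by (simp add: mult.assoc)
next
  case False
  then have "X > 0" using assms by simp
  have "X * (X*a*a + T*a*b + T*b*a + Y*b*b) = (X*a + T*b)^2 + (X*Y - T^2)*b^2"
    by (simp add: algebra_simps power2_eq_square)
  also have "\<dots> \<ge> 0" using assms by simp
  finally show ?thesis using \<open>X > 0\<close> by (simp add: zero_le_mult_iff)
qed


definition Bj :: "nat \<Rightarrow> (nat \<Rightarrow> real) \<Rightarrow> (nat \<Rightarrow> nat \<Rightarrow> real) \<Rightarrow> nat \<Rightarrow> nat \<Rightarrow> nat \<Rightarrow> real" where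
  "Bj n u w j k l = (if k = j then (if l = j then u j - u j * u j
        else if l = n+j then w j (n+j) - u j * u (n+j) else 0)
     else if k = n+j then (if l = j then w j (n+j) - u j * u (n+j)
        else if l = n+j then u (n+j) - u (n+j) * u (n+j) else 0) else 0)"

definition wnew :: "nat \<Rightarrow> (nat \<Rightarrow> real) \<Rightarrow> (nat \<Rightarrow> nat \<Rightarrow> real) \<Rightarrow> nat \<Rightarrow> nat \<Rightarrow> real" where
  "wnew n u w k l = u k * u l + (\<Sum>j=1..n. Bj n u w j k l)"

lemma E_low:
  assumes "k \<in> {1..n}"
  shows "(\<Sum>j=1..n. Bj n u w j k l) = Bj n u w k k l"
proof -
  have "(\<Sum>j=1..n. Bj n u w j k l) = (\<Sum>j=1..n. if j = k then Bj n u w k k l else 0)"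
    by (rule sum.cong) (use assms in \<open>auto simp: Bj_def\<close>)
  also have "\<dots> = Bj n u w k k l" using assms by (simp add: sum.delta)
  finally show ?thesis .
qed

lemma E_high:
  assumes "k \<in> {n+1..2*n}"
  shows "(\<Sum>j=1..n. Bj n u w j k l) = Bj n u w (k-n) k l"
proof -
  have "(\<Sum>j=1..n. Bj n u w j k l) = (\<Sum>j=1..n. if j = k-n then Bj n u w (k-n) k l else 0)"
    by (rule sum.cong) (use assms in \<open>auto simp: Bj_def\<close>)
  also have "\<dots> = Bj n u w (k-n) k l" using assms by (auto simp: sum.delta)
  finally show ?thesis .
qed

lemma E_zero:
  shows "(\<Sum>j=1..n. Bj n u w j 0 l) = 0" "(\<Sum>j=1..n. Bj n u w j k 0) = 0"
  by (auto simp: Bj_def intro!: sum.neutral)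

lemma Bj_sym: "Bj n u w j k l = Bj n u w j l k"
  by (auto simp: Bj_def)

lemma dd:
  fixes c :: real
  assumes "finite S"
  shows "(\<Sum>k\<in>S. \<Sum>l\<in>S. if k = a \<and> l = b then c else 0) = (if a \<in> S \<and> b \<in> S then c else 0)"
proof -
  have "\<And>k. (\<Sum>l\<in>S. if k = a \<and> l = b then c else 0) = (if k = a then (if b \<in> S then c else 0) else 0)"
    using assms by (auto simp: sum.delta)
  then show ?thesis using assms by (simp add: sum.delta)
qed

lemma Bj_quad:
  assumes "1 \<le> j" "j \<le> n"
  shows "(\<Sum>k=0..2*n. \<Sum>l=0..2*n. v k * Bj n u w j k l * v l) =
     (u j - u j * u j) * v j * v j + (w j (n+j) - u j * u (n+j)) * v j * v (n+j)
     + (w j (n+j) - u j * u (n+j)) * v (n+j) * v j + (u (n+j) - u (n+j) * u (n+j)) * v (n+j) * v (n+j)"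
proof -
  let ?X = "(u j - u j * u j) * v j * v j"
  let ?T1 = "(w j (n+j) - u j * u (n+j)) * v j * v (n+j)"
  let ?T2 = "(w j (n+j) - u j * u (n+j)) * v (n+j) * v j"
  let ?Y = "(u (n+j) - u (n+j) * u (n+j)) * v (n+j) * v (n+j)"
  have pw: "v k * Bj n u w j k l * v l = (if k = j \<and> l = j then ?X else 0) + (if k = j \<and> l = n+j then ?T1 else 0)
     + (if k = n+j \<and> l = j then ?T2 else 0) + (if k = n+j \<and> l = n+j then ?Y else 0)" for k l
    using assms by (auto simp: Bj_def)
  have in1: "j \<in> {0..2*n}" "n+j \<in> {0..2*n}" using assms by auto
  show ?thesis
    unfolding pw sum.distrib dd[OF finite_atLeastAtMost] using in1 by simp
qed

lemma swap3:
  "(\<Sum>k\<in>I. \<Sum>l\<in>L. \<Sum>j\<in>J. f j k l) = (\<Sum>j\<in>J. \<Sum>k\<in>I. \<Sum>l\<in>L. (f j k l :: real))"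
proof -
  have "(\<Sum>k\<in>I. \<Sum>l\<in>L. \<Sum>j\<in>J. f j k l) = (\<Sum>k\<in>I. \<Sum>j\<in>J. \<Sum>l\<in>L. f j k l)"
    by (rule sum.cong[OF refl]) (rule sum.swap)
  also have "\<dots> = (\<Sum>j\<in>J. \<Sum>k\<in>I. \<Sum>l\<in>L. f j k l)" by (rule sum.swap)
  finally show ?thesis .
qed

lemma psd_new:
  assumes n1: "n \<ge> 1" and F: "mccormick_feasible n m a cx cy b x y u w"
  shows "sym_psd (2*n) (Wmat u (wnew n u w))"
proof -
  define c where "c k = (if k = 0 then 1 else u k)" for k
  have Wc: "Wmat u (wnew n u w) k l = c k * c l + (\<Sum>j=1..n. Bj n u w j k l)" for k l
    using E_zero(1)[of n u w] E_zero(2)[of n u w k] E_zero(1)[of n u w l] by (simp add: Wmat_def c_def wnew_def)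
  have sym: "\<forall>i\<in>{0..2*n}. \<forall>k\<in>{0..2*n}. Wmat u (wnew n u w) i k = Wmat u (wnew n u w) k i"
    unfolding Wc by (simp add: Bj_sym mult.commute)
  have psd: "(\<Sum>i=0..2*n. \<Sum>k=0..2*n. v i * Wmat u (wnew n u w) i k * v k) \<ge> 0" for v
  proof -
    have "(\<Sum>i=0..2*n. \<Sum>k=0..2*n. v i * Wmat u (wnew n u w) i k * v k)
       = (\<Sum>i=0..2*n. \<Sum>k=0..2*n. (v i * c i) * (v k * c k)) +
         (\<Sum>i=0..2*n. \<Sum>k=0..2*n. \<Sum>j=1..n. v i * Bj n u w j i k * v k)"
    proof -
      have e: "v i * Wmat u (wnew n u w) i k * v k = (v i * c i) * (v k * c k) + (\<Sum>j=1..n. v i * Bj n u w j i k * v k)" for i k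
        unfolding Wc by (simp add: ring_distribs sum_distrib_left sum_distrib_right mult_ac)
      show ?thesis by (simp only: e sum.distrib)
    qed
    also have "\<dots> = (\<Sum>i=0..2*n. v i * c i) * (\<Sum>i=0..2*n. v i * c i) +
         (\<Sum>j=1..n. \<Sum>i=0..2*n. \<Sum>k=0..2*n. v i * Bj n u w j i k * v k)"
      by (subst swap3) (simp only: sum_product)
    also have "\<dots> \<ge> 0"
    proof (rule add_nonneg_nonneg)
      show "0 \<le> (\<Sum>i=0..2*n. v i * c i) * (\<Sum>i=0..2*n. v i * c i)" by simp
      show "0 \<le> (\<Sum>j=1..n. \<Sum>i=0..2*n. \<Sum>k=0..2*n. v i * Bj n u w j i k * v k)"
      proof (rule sum_nonneg)
        fix j assume j: "j \<in> {1..n}"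
        have ux: "0 \<le> u j" "u j \<le> 1" "0 \<le> u (n+j)" "u (n+j) \<le> 1" using F j
          by (auto simp: mccormick_feasible_def)
        have wb: "max 0 (u j + u (n+j) - 1) \<le> w j (n+j)" "w j (n+j) \<le> min (u j) (u (n+j))"
          using F j by (auto simp: mccormick_feasible_def)
        have d: "(w j (n+j) - u j * u (n+j))^2 \<le> (u j - u j * u j) * (u (n+j) - u (n+j) * u (n+j))"
          by (rule det2) (use ux wb in auto)
        have X: "u j - u j * u j \<ge> 0" using ux by (simp add: mult_left_le)
        have Y: "u (n+j) - u (n+j) * u (n+j) \<ge> 0" using ux by (simp add: mult_left_le)
        show "0 \<le> (\<Sum>i=0..2*n. \<Sum>k=0..2*n. v i * Bj n u w j i k * v k)"
          using Bj_quad[of j n v u w] j quad2[OF X Y d, of "v j" "v (n+j)"]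
          by (simp add: mult.assoc)
      qed
    qed
    finally show ?thesis .
  qed
  show ?thesis unfolding sym_psd_def using sym psd by blast
qed

lemma prod_bounds:
  fixes a b :: real
  assumes "0 \<le> a" "a \<le> 1" "0 \<le> b" "b \<le> 1"
  shows "max 0 (a + b - 1) \<le> a * b \<and> a * b \<le> min a b"
proof -
  have "0 \<le> (1-a)*(1-b)" using assms by simp
  then have "a + b - 1 \<le> a * b" by (simp add: algebra_simps)
  moreover have "a * b \<le> a" using assms by (simp add: mult_left_le)
  moreover have "a * b \<le> b" using assms by (simp add: mult_left_le_one_le)
  ultimately show ?thesis using assms by simp
qed

lemma wnew_pair: "j \<in> {1..n} \<Longrightarrow> wnew n u w j (n+j) = w j (n+j)"
  unfolding wnew_def by (subst E_low) (auto simp: Bj_def)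

lemma mc_new:
  assumes n1: "n \<ge> 1" and F: "mccormick_feasible n m a cx cy b x y u w"
  shows "mccormick_feasible n m a cx cy b x y u (wnew n u w)"
    and "\<And>j. objective n a cx cy j x y (wnew n u w) = objective n a cx cy j x y w"
proof -
  show obj: "objective n a cx cy j x y (wnew n u w) = objective n a cx cy j x y w" for j
    unfolding objective_def by (simp add: wnew_pair)
  have ub: "\<And>i. i \<in> {1..2*n} \<Longrightarrow> 0 \<le> u i \<and> u i \<le> 1" using F by (auto simp: mccormick_feasible_def)
  have wb: "\<And>i k. i \<in> {1..2*n} \<Longrightarrow> k \<in> {1..2*n} \<Longrightarrow> max 0 (u i + u k - 1) \<le> w i k \<and> w i k \<le> min (u i) (u k)"
    using F by (auto simp: mccormick_feasible_def)
  have B: "max 0 (u i + u k - 1) \<le> wnew n u w i k \<and> wnew n u w i k \<le> min (u i) (u k)"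
    if i: "i \<in> {1..2*n}" and k: "k \<in> {1..2*n}" for i k
  proof -
    have pu: "max 0 (u i + u k - 1) \<le> u i * u k \<and> u i * u k \<le> min (u i) (u k)"
      using ub[OF i] ub[OF k] by (intro prod_bounds) auto
    show ?thesis
    proof (cases "i \<le> n")
      case True
      then have E: "wnew n u w i k = u i * u k + Bj n u w i i k"
        unfolding wnew_def using i by (subst E_low) auto
      show ?thesis
      proof (cases "k = i")
        case True
        then show ?thesis using E ub[OF i] by (simp add: Bj_def)
      next
        case False
        note ki = False
        show ?thesis
        proof (cases "k = n+i")
          case True
          then show ?thesis using E wb[OF i k] ki by (simp add: Bj_def)
        next
          case False
          then show ?thesis using E ki pu by (simp add: Bj_def)
        qed
      qed
    next
      case False
      then have E: "wnew n u w i k = u i * u k + Bj n u w (i-n) i k"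
        unfolding wnew_def using i by (subst E_high) auto
      define j where "j = i - n"
      have ij: "i = n + j" "j \<in> {1..2*n}" "j \<ge> 1" using False i unfolding j_def by auto
      show ?thesis
      proof (cases "k = j")
        case True
        have "max 0 (u j + u i - 1) \<le> w j i \<and> w j i \<le> min (u j) (u i)"
          using wb[OF ij(2) i] .
        then show ?thesis using E True ij by (auto simp: Bj_def j_def[symmetric])
      next
        case False
        note kj = False
        show ?thesis
        proof (cases "k = i")
          case True
          then show ?thesis using E ub[OF i] ij kj by (simp add: Bj_def j_def[symmetric])
        next
          case False
          then show ?thesis using E kj ij pu by (simp add: Bj_def j_def[symmetric])
        qed
      qed
    qed
  qed
  have C1: "\<forall>j\<in>{1..m}. objective n a cx cy j x y w \<ge> b j"
    and C2: "\<forall>i\<in>{1..n}. x i = u i \<and> y i = u (n+i)"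
    using F unfolding mccormick_feasible_def by blast+
  show "mccormick_feasible n m a cx cy b x y u (wnew n u w)"
    unfolding mccormick_feasible_def obj using C1 C2 ub B by blast
qed


type_synonym pt = "(nat \<Rightarrow> real) \<times> (nat \<Rightarrow> real) \<times> (nat \<Rightarrow> real) \<times> (nat \<Rightarrow> nat \<Rightarrow> real)"

lemma compact_PiE_UNIV:
  "(\<And>i. compact (S i)) \<Longrightarrow> compact (PiE UNIV S :: ('a \<Rightarrow> 'b::topological_space) set)"
  using compactin_PiE[of "\<lambda>i. euclidean" UNIV S] by (simp add: euclidean_product_topology)

lemma cont_x [continuous_intros]: "continuous_on UNIV (\<lambda>p::pt. fst p i)"
  using continuous_on_compose2[OF continuous_on_product_coordinates[of i] continuous_on_fst[OF continuous_on_id], of UNIV] by simp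
lemma cont_y [continuous_intros]: "continuous_on UNIV (\<lambda>p::pt. fst (snd p) i)"
  using continuous_on_compose2[OF continuous_on_product_coordinates[of i] continuous_on_fst[OF continuous_on_snd[OF continuous_on_id]], of UNIV] by simp
lemma cont_u [continuous_intros]: "continuous_on UNIV (\<lambda>p::pt. fst (snd (snd p)) i)"
  using continuous_on_compose2[OF continuous_on_product_coordinates[of i] continuous_on_fst[OF continuous_on_snd[OF continuous_on_snd[OF continuous_on_id]]], of UNIV] by simp
lemma cont_w [continuous_intros]: "continuous_on UNIV (\<lambda>p::pt. snd (snd (snd p)) i k)"
proof -
  have "continuous_on UNIV (\<lambda>p::pt. snd (snd (snd p)) i)"
    using continuous_on_compose2[OF continuous_on_product_coordinates[of i] continuous_on_snd[OF continuous_on_snd[OF continuous_on_snd[OF continuous_on_id]]], of UNIV] by simp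
  then show ?thesis
    using continuous_on_compose2[OF continuous_on_product_coordinates[of k], of UNIV] by simp
qed
definition fe :: "nat \<Rightarrow> nat \<Rightarrow> (nat \<Rightarrow> nat \<Rightarrow> real) \<Rightarrow> (nat \<Rightarrow> nat \<Rightarrow> real) \<Rightarrow> (nat \<Rightarrow> nat \<Rightarrow> real)
   \<Rightarrow> (nat \<Rightarrow> real) \<Rightarrow> pt \<Rightarrow> bool" where
  "fe n m a cx cy b p = mccormick_feasible n m a cx cy b (fst p) (fst (snd p)) (fst (snd (snd p))) (snd (snd (snd p)))"

lemma closed_fe: "closed {p. fe n m a cx cy b p}"
  unfolding fe_def mccormick_feasible_def objective_def Ball_def
  by (intro closed_Collect_conj closed_Collect_all closed_Collect_imp open_Collect_const
      closed_Collect_le closed_Collect_eq continuous_intros)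

lemma cont_obj: "continuous_on S (\<lambda>p::pt. objective n a cx cy 0 (fst p) (fst (snd p)) (snd (snd (snd p))))"
proof -
  have "continuous_on UNIV (\<lambda>p::pt. objective n a cx cy 0 (fst p) (fst (snd p)) (snd (snd (snd p))))"
    unfolding objective_def by (intro continuous_intros)
  then show ?thesis by (rule continuous_on_subset) auto
qed

definition trunc :: "nat \<Rightarrow> pt \<Rightarrow> pt" where
  "trunc n p = (\<lambda>i. if i \<in> {1..n} then fst p i else 0, \<lambda>i. if i \<in> {1..n} then fst (snd p) i else 0,
     \<lambda>i. if i \<in> {1..2*n} then fst (snd (snd p)) i else 0,
     \<lambda>i k. if i \<in> {1..2*n} \<and> k \<in> {1..2*n} then snd (snd (snd p)) i k else 0)"

definition bx :: "nat \<Rightarrow> pt set" where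
  "bx n = PiE UNIV (\<lambda>i. if i \<in> {1..n} then {0..1} else {0}) \<times> PiE UNIV (\<lambda>i. if i \<in> {1..n} then {0..1} else {0})
     \<times> PiE UNIV (\<lambda>i. if i \<in> {1..2*n} then {0..1} else {0})
     \<times> PiE UNIV (\<lambda>i. PiE UNIV (\<lambda>k. if i \<in> {1..2*n} \<and> k \<in> {1..2*n} then {0..1} else {0}))"

lemma compact_bx: "compact (bx n)"
  unfolding bx_def
  by (intro compact_Times compact_PiE_UNIV) auto

lemma trunc_obj: "objective n a cx cy j (fst (trunc n p)) (fst (snd (trunc n p))) (snd (snd (snd (trunc n p))))
   = objective n a cx cy j (fst p) (fst (snd p)) (snd (snd (snd p)))"
proof -
  have 1: "(\<Sum>i=1..n. a j i * snd (snd (snd (trunc n p))) i (n+i)) = (\<Sum>i=1..n. a j i * snd (snd (snd p)) i (n+i))"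
    by (rule sum.cong) (auto simp: trunc_def)
  have 2: "(\<Sum>i=1..n. cx j i * fst (trunc n p) i) = (\<Sum>i=1..n. cx j i * fst p i)"
    by (rule sum.cong) (auto simp: trunc_def)
  have 3: "(\<Sum>i=1..n. cy j i * fst (snd (trunc n p)) i) = (\<Sum>i=1..n. cy j i * fst (snd p) i)"
    by (rule sum.cong) (auto simp: trunc_def)
  show ?thesis unfolding objective_def 1 2 3 ..
qed

lemma trunc_fe:
  assumes "fe n m a cx cy b p"
  shows "fe n m a cx cy b (trunc n p)" "trunc n p \<in> bx n"
proof -
  obtain x y u w where p: "p = (x,y,u,w)" by (cases p) auto
  have F: "mccormick_feasible n m a cx cy b x y u w" using assms p by (simp add: fe_def)
  have C1: "\<forall>j\<in>{1..m}. objective n a cx cy j x y w \<ge> b j"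
    and C2: "\<forall>i\<in>{1..n}. x i = u i \<and> y i = u (n+i)"
    and C3: "\<forall>i\<in>{1..2*n}. 0 \<le> u i \<and> u i \<le> 1"
    and C4: "\<forall>i\<in>{1..2*n}. \<forall>k\<in>{1..2*n}. max 0 (u i + u k - 1) \<le> w i k \<and> w i k \<le> min (u i) (u k)"
    using F unfolding mccormick_feasible_def by blast+
  have ob: "\<And>j. objective n a cx cy j (fst (trunc n p)) (fst (snd (trunc n p))) (snd (snd (snd (trunc n p))))
     = objective n a cx cy j x y w" using trunc_obj[of n a cx cy _ p] p by simp
  have tp: "trunc n p = (\<lambda>i. if i \<in> {1..n} then x i else 0, \<lambda>i. if i \<in> {1..n} then y i else 0,
     \<lambda>i. if i \<in> {1..2*n} then u i else 0,
     \<lambda>i k. if i \<in> {1..2*n} \<and> k \<in> {1..2*n} then w i k else 0)" unfolding trunc_def p fst_conv snd_conv ..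
  show "fe n m a cx cy b (trunc n p)"
    unfolding fe_def mccormick_feasible_def ob
  proof (intro conjI)
    show "\<forall>j\<in>{1..m}. b j \<le> objective n a cx cy j x y w" using C1 by blast
    show "\<forall>i\<in>{1..n}. fst (trunc n p) i = fst (snd (snd (trunc n p))) i \<and>
        fst (snd (trunc n p)) i = fst (snd (snd (trunc n p))) (n + i)"
      using C2 unfolding tp by auto
    show "\<forall>i\<in>{1..2 * n}. 0 \<le> fst (snd (snd (trunc n p))) i \<and> fst (snd (snd (trunc n p))) i \<le> 1"
      using C3 unfolding tp by auto
    show "\<forall>i\<in>{1..2 * n}. \<forall>k\<in>{1..2 * n}. max 0 (fst (snd (snd (trunc n p))) i + fst (snd (snd (trunc n p))) k - 1)
          \<le> snd (snd (snd (trunc n p))) i k \<and>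
          snd (snd (snd (trunc n p))) i k \<le> min (fst (snd (snd (trunc n p))) i) (fst (snd (snd (trunc n p))) k)"
      using C4 unfolding tp by simp
  qed
  have wb: "0 \<le> w i k \<and> w i k \<le> 1" if "i \<in> {1..2*n}" "k \<in> {1..2*n}" for i k
    using C4 C3 that by fastforce
  have xb: "0 \<le> x i \<and> x i \<le> 1 \<and> 0 \<le> y i \<and> y i \<le> 1" if "i \<in> {1..n}" for i
    using C2 C3 that by force
  show "trunc n p \<in> bx n"
    unfolding tp bx_def using xb C3 wb by (auto simp: PiE_iff)
qed

theorem mainTheorem1:
  fixes n m :: nat
    and a cx cy :: "nat \<Rightarrow> nat \<Rightarrow> real"
    and b :: "nat \<Rightarrow> real"
  assumes "n \<ge> 1" and "m \<ge> 1"
  defines "FMc \<equiv> \<lambda>(x, y, u, w). mccormick_feasible n m a cx cy b x y u w"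
    and "FMS \<equiv> \<lambda>(x, y, u, w). mcsdp_feasible n m a cx cy b x y u w"
    and "obj \<equiv> \<lambda>(x, y, u, w). objective n a cx cy 0 x y w"
  shows "((\<nexists>p. FMc p) \<and> (\<nexists>p. FMS p)) \<or>
         ((\<exists>p. FMc p) \<and> (\<exists>p. FMS p) \<and>
          (\<exists>z. is_min_value FMc obj z \<and> is_min_value FMS obj z))"
proof -
  define ob where "ob p = objective n a cx cy 0 (fst p) (fst (snd p)) (snd (snd (snd p)))" for p :: pt
  have FMc_fe: "FMc p = fe n m a cx cy b p" for p
    by (cases p) (simp add: FMc_def fe_def)
  have FMS_FMc: "FMS p \<Longrightarrow> FMc p" for p
    by (cases p) (simp add: FMc_def FMS_def mcsdp_feasible_def)
  have obj_ob: "obj p = ob p" for p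
    by (cases p) (simp add: obj_def ob_def)
  show ?thesis
  proof (cases "\<exists>p. FMc p")
    case False
    then show ?thesis using FMS_FMc by blast
  next
    case True
    then obtain p1 where p1: "fe n m a cx cy b p1" using FMc_fe by blast
    define K where "K = bx n \<inter> {p. fe n m a cx cy b p}"
    have cK: "compact K" unfolding K_def
      by (intro compact_Int_closed compact_bx closed_fe)
    have neK: "K \<noteq> {}" using trunc_fe[OF p1] unfolding K_def by blast
    obtain p0 where p0: "p0 \<in> K" and p0min: "\<forall>q\<in>K. ob p0 \<le> ob q"
      using continuous_attains_inf[OF cK neK, of ob] cont_obj unfolding ob_def by blast
    have lb: "ob p0 \<le> ob q" if "FMc q" for q
    proof -
      have "fe n m a cx cy b q" using that FMc_fe by simp
      then have "trunc n q \<in> K" using trunc_fe unfolding K_def by blast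
      then have "ob p0 \<le> ob (trunc n q)" using p0min by blast
      also have "ob (trunc n q) = ob q" unfolding ob_def by (rule trunc_obj)
      finally show ?thesis .
    qed
    obtain x0 y0 u0 w0 where p0e: "p0 = (x0,y0,u0,w0)" by (cases p0) auto
    have F0: "mccormick_feasible n m a cx cy b x0 y0 u0 w0"
      using p0 p0e unfolding K_def by (simp add: fe_def)
    define q0 where "q0 = (x0, y0, u0, wnew n u0 w0)"
    have Fq0: "FMS q0"
      unfolding q0_def FMS_def using mc_new(1)[OF assms(1) F0] psd_new[OF assms(1) F0]
      by (simp add: mcsdp_feasible_def)
    have oq0: "obj q0 = ob p0"
      unfolding q0_def obj_def ob_def p0e using mc_new(2)[OF assms(1) F0] by simp
    have "is_min_value FMc obj (ob p0)"
      unfolding is_min_value_def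
    proof (intro conjI exI allI impI)
      show "FMc p0" using p0 FMc_fe unfolding K_def by simp
      show "obj p0 = ob p0" by (rule obj_ob)
      show "ob p0 \<le> obj q" if "FMc q" for q using lb[OF that] obj_ob by simp
    qed
    moreover have "is_min_value FMS obj (ob p0)"
      unfolding is_min_value_def
    proof (intro conjI exI allI impI)
      show "FMS q0" by (rule Fq0)
      show "obj q0 = ob p0" by (rule oq0)
      show "ob p0 \<le> obj q" if "FMS q" for q using lb[OF FMS_FMc[OF that]] obj_ob by simp
    qed
    ultimately show ?thesis using True Fq0 by blast
  qed
qed

end
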